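(* Let $L,D\subseteq\Sigma^\omega$ be such that $D$ has trivial right-congruence. Then $\sim_{L,D}$ is a right-congruence on $\Sigma^*$.
   Context: For $L\subseteq\Sigma^\omega$, the canonical right-congruence $\sim_L$ on $\Sigma^*$ is given by $u\sim_L v$ iff for all $\alpha\in\Sigma^\omega$: $u\alpha\in L\iff v\alpha\in L$. $D$ has trivial right-congruence if $\sim_D$ has exactly one equivalence class. For $w,w'\in\Sigma^*$, $w\sim_{L,D}w'$ iff for all $\alpha\in\Sigma^\omega\setminus D$: $w\alpha\in L\iff w'\alpha\in L$. A right-congruence is an equivalence relation $\sim$ on $\Sigma^*$ such that $u\sim v$ implies $u\sigma\sim v\sigma$ for all $\sigma\in\Sigma$. *)

theory Defs
  imports "HOL-Library.Omega_Words_Fun"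
begin

text \<open>The alphabet Sigma is the (arbitrary) type 'a; finite words = all lists,
infinite words = all functions nat => 'a.\<close>

definition canon_rc :: "'a word set \<Rightarrow> ('a list \<times> 'a list) set" where
  "canon_rc L = {(u, v). \<forall>\<alpha>. (u \<frown> \<alpha> \<in> L) \<longleftrightarrow> (v \<frown> \<alpha> \<in> L)}"

definition trivial_rc :: "'a word set \<Rightarrow> bool" where
  "trivial_rc D \<longleftrightarrow> card (UNIV // canon_rc D) = 1"

definition rel_LD :: "'a word set \<Rightarrow> 'a word set \<Rightarrow> ('a list \<times> 'a list) set" where
  "rel_LD L D = {(w, w'). \<forall>\<alpha>. \<alpha> \<notin> D \<longrightarrow> ((w \<frown> \<alpha> \<in> L) \<longleftrightarrow> (w' \<frown> \<alpha> \<in> L))}"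

definition right_congruence :: "('a list \<times> 'a list) set \<Rightarrow> bool" where
  "right_congruence R \<longleftrightarrow> equiv UNIV R \<and>
     (\<forall>u v \<sigma>. (u, v) \<in> R \<longrightarrow> (u @ [\<sigma>], v @ [\<sigma>]) \<in> R)"

end

theory Submission
  imports Defs
begin

lemma canon_equiv: "equiv UNIV (canon_rc D)"
  unfolding canon_rc_def by (auto intro!: equivI refl_onI symI transI)

lemma triv_all:
  assumes "trivial_rc D"
  shows "(u, v) \<in> canon_rc D"
proof -
  obtain X where X: "UNIV // canon_rc D = {X}"
    using assms unfolding trivial_rc_def by (metis card_1_singletonE)
  have "canon_rc D `` {u} \<in> UNIV // canon_rc D" "canon_rc D `` {v} \<in> UNIV // canon_rc D"
    by (auto intro: quotientI)
  then have "canon_rc D `` {u} = canon_rc D `` {v}" using X by auto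
  then show ?thesis using eq_equiv_class_iff[OF canon_equiv] by blast
qed

theorem proposition1:
  fixes L D :: "'a word set"
  assumes "trivial_rc D"
  shows "right_congruence (rel_LD L D)"
  unfolding right_congruence_def
proof (intro conjI allI impI)
  show "equiv UNIV (rel_LD L D)"
    unfolding rel_LD_def by (auto intro!: equivI refl_onI symI transI)
next
  fix u v \<sigma>
  assume uv: "(u, v) \<in> rel_LD L D"
  show "(u @ [\<sigma>], v @ [\<sigma>]) \<in> rel_LD L D"
    unfolding rel_LD_def
  proof (clarify)
    fix \<alpha> assume a: "\<alpha> \<notin> D"
    have "([], [\<sigma>]) \<in> canon_rc D" by (rule triv_all[OF assms])
    then have "[\<sigma>] \<frown> \<alpha> \<notin> D" using a unfolding canon_rc_def by auto
    then have "(u \<frown> ([\<sigma>] \<frown> \<alpha>) \<in> L) = (v \<frown> ([\<sigma>] \<frown> \<alpha>) \<in> L)"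
      using uv unfolding rel_LD_def by auto
    then show "((u @ [\<sigma>]) \<frown> \<alpha> \<in> L) = ((v @ [\<sigma>]) \<frown> \<alpha> \<in> L)" by simp
  qed
qed

end
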